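(* Let $d\in(0,1]$, $\kappa>0$, and let $\tau$ be the solution in $D(L_d)$ of $-L_d\tau=1$ (the limit mean extinction time, vanishing at $(0,0)$ and $(1,1)$). Let $H(z)=-2\big(z\ln z+(1-z)\ln(1-z)\big)$ and define, for $x=(x_1,x_2)\in[0,1]^2$, $$\underline\tau(x)=(d+1)H(z),\qquad z=\frac{x_1+dx_2}{1+d}.$$ Then $\underline\tau$ is a subsolution of $-L_d\tau=1$, i.e. $-L_d\underline\tau\le 1$, and $\underline\tau\le\tau$ on $[0,1]^2$.
   Context: Let $\mathcal D=[0,1]^2$, $M=\begin{pmatrix} d & -d\\ -1 & 1\end{pmatrix}$, and $$L_d u(x)=\frac{x_1(1-x_1)}{2}u_{x_1x_1}(x)+\frac{x_2(1-x_2)}{2d}u_{x_2x_2}(x)-\kappa\, Mx\cdot\nabla u(x).$$ Let $E=\{f\in C(\mathcal D): f(0,0)=f(1,1)=0\}$. For $N$ with $N_2=dN$ an integer, let $N_1=N$, $\delta t=1/N$, $A=\mathrm{Id}-\frac{\kappa}{N}M$, and $$B_N(g)(x)=\sum_{j_1=0}^{N_1}\sum_{j_2=0}^{N_2}\binom{N_1}{j_1}\binom{N_2}{j_2}x_1^{j_1}(1-x_1)^{N_1-j_1}x_2^{j_2}(1-x_2)^{N_2-j_2}\,g\!\left(\tfrac{j_1}{N_1},\tfrac{j_2}{N_2}\right);$$ $D(L_d)=\{f\in E:\ (B_N(f\circ A)-f)/\delta t\to L_d f \text{ in } E\}$. The function $\underline\tau$ is the mean extinction time of the one-patch Wright–Fisher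 diffusion with capacity $(1+d)N$ (no exchange). *)

theory Defs
  imports "HOL-Analysis.Analysis"
begin

definition Dsq :: "(real \<times> real) set" where
  "Dsq = {0..1} \<times> {0..1}"

definition inE :: "(real \<times> real \<Rightarrow> real) \<Rightarrow> bool" where
  "inE f \<longleftrightarrow> continuous_on Dsq f \<and> f (0,0) = 0 \<and> f (1,1) = 0"

definition d1 :: "(real \<times> real \<Rightarrow> real) \<Rightarrow> real \<times> real \<Rightarrow> real" where
  "d1 u x = deriv (\<lambda>t. u (t, snd x)) (fst x)"
definition d2 :: "(real \<times> real \<Rightarrow> real) \<Rightarrow> real \<times> real \<Rightarrow> real" where
  "d2 u x = deriv (\<lambda>t. u (fst x, t)) (snd x)"
definition d11 :: "(real \<times> real \<Rightarrow> real) \<Rightarrow> real \<times> real \<Rightarrow> real" where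
  "d11 u x = deriv (\<lambda>t. deriv (\<lambda>s. u (s, snd x)) t) (fst x)"
definition d22 :: "(real \<times> real \<Rightarrow> real) \<Rightarrow> real \<times> real \<Rightarrow> real" where
  "d22 u x = deriv (\<lambda>t. deriv (\<lambda>s. u (fst x, s)) t) (snd x)"

definition Mmap :: "real \<Rightarrow> real \<times> real \<Rightarrow> real \<times> real" where
  "Mmap d x = (d * fst x - d * snd x, - fst x + snd x)"

definition Ld :: "real \<Rightarrow> real \<Rightarrow> (real \<times> real \<Rightarrow> real) \<Rightarrow> real \<times> real \<Rightarrow> real" where
  "Ld d \<kappa> u x =
     fst x * (1 - fst x) / 2 * d11 u x
   + snd x * (1 - snd x) / (2 * d) * d22 u x
   - \<kappa> * (fst (Mmap d x) * d1 u x + snd (Mmap d x) * d2 u x)"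

definition Amap :: "real \<Rightarrow> real \<Rightarrow> nat \<Rightarrow> real \<times> real \<Rightarrow> real \<times> real" where
  "Amap d \<kappa> N x = (fst x - \<kappa> / real N * fst (Mmap d x), snd x - \<kappa> / real N * snd (Mmap d x))"

definition bern :: "nat \<Rightarrow> nat \<Rightarrow> (real \<times> real \<Rightarrow> real) \<Rightarrow> real \<times> real \<Rightarrow> real" where
  "bern N1 N2 g x =
     (\<Sum>j1\<le>N1. \<Sum>j2\<le>N2.
        real (N1 choose j1) * real (N2 choose j2)
        * fst x ^ j1 * (1 - fst x) ^ (N1 - j1)
        * snd x ^ j2 * (1 - snd x) ^ (N2 - j2)
        * g (real j1 / real N1, real j2 / real N2))"

text \<open>Difference quotient (B_N(f o A) - f) / delta t, with delta t = 1/N, N1 = N, N2 = d N.\<close>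
definition genq :: "real \<Rightarrow> real \<Rightarrow> nat \<Rightarrow> nat \<Rightarrow> (real \<times> real \<Rightarrow> real) \<Rightarrow> real \<times> real \<Rightarrow> real" where
  "genq d \<kappa> N N2 f x = (bern N N2 (f \<circ> Amap d \<kappa> N) x - f x) * real N"

definition Hfun :: "real \<Rightarrow> real" where
  "Hfun z = - 2 * (z * ln z + (1 - z) * ln (1 - z))"

definition taulow :: "real \<Rightarrow> real \<times> real \<Rightarrow> real" where
  "taulow d x = (d + 1) * Hfun ((fst x + d * snd x) / (1 + d))"

end

theory Submission
  imports Defs "HOL-Real_Asymp.Real_Asymp"
begin

definition bw :: "nat \<Rightarrow> real \<Rightarrow> nat \<Rightarrow> real" where
  "bw n p j = real (n choose j) * p ^ j * (1 - p) ^ (n - j)"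

definition Sb :: "nat \<Rightarrow> real \<Rightarrow> (nat \<Rightarrow> real) \<Rightarrow> real" where
  "Sb n p f = (\<Sum>j\<le>n. bw n p j * f j)"

lemma Sb_Suc: "Sb (Suc n) p f = Sb n p (\<lambda>j. p * f (Suc j) + (1 - p) * f j)"
proof -
  define B where "B = (\<Sum>j<n. real (n choose Suc j) * p ^ Suc j * (1-p) ^ (n - j) * f (Suc j))"
  have 1: "Sb (Suc n) p f = bw (Suc n) p 0 * f 0 + (\<Sum>j\<le>n. bw (Suc n) p (Suc j) * f (Suc j))"
    unfolding Sb_def by (rule sum.atMost_Suc_shift)
  have 2: "(\<Sum>j\<le>n. bw (Suc n) p (Suc j) * f (Suc j)) =
      (\<Sum>j\<le>n. p * bw n p j * f (Suc j)) + (\<Sum>j\<le>n. real (n choose Suc j) * p ^ Suc j * (1-p) ^ (n - j) * f (Suc j))"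
    unfolding bw_def by (simp add: sum.distrib[symmetric] algebra_simps)
  have 3: "(\<Sum>j\<le>n. real (n choose Suc j) * p ^ Suc j * (1-p) ^ (n - j) * f (Suc j)) = B"
    unfolding B_def by (simp add: lessThan_Suc_atMost[symmetric])
  have 4: "bw (Suc n) p 0 * f 0 + B = (\<Sum>j<Suc n. real (n choose j) * p ^ j * (1-p) ^ (Suc n - j) * f j)"
    unfolding bw_def B_def by (subst sum.lessThan_Suc_shift) (simp)
  have 5: "(\<Sum>j<Suc n. real (n choose j) * p ^ j * (1-p) ^ (Suc n - j) * f j) = (\<Sum>j\<le>n. (1 - p) * bw n p j * f j)"
    unfolding bw_def lessThan_Suc_atMost
    by (intro sum.cong refl) (simp add: Suc_diff_le)
  have "Sb (Suc n) p f = (\<Sum>j\<le>n. p * bw n p j * f (Suc j)) + (\<Sum>j\<le>n. (1 - p) * bw n p j * f j)"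
    using 1 2 3 4 5 by simp
  also have "\<dots> = Sb n p (\<lambda>j. p * f (Suc j) + (1 - p) * f j)"
    unfolding Sb_def sum.distrib[symmetric] by (intro sum.cong refl) (simp add: algebra_simps)
  finally show ?thesis .
qed

lemma Sb_add: "Sb n p (\<lambda>j. f j + g j) = Sb n p f + Sb n p g"
  unfolding Sb_def by (simp add: algebra_simps sum.distrib)
lemma Sb_cmult: "Sb n p (\<lambda>j. c * f j) = c * Sb n p f"
  unfolding Sb_def by (simp add: algebra_simps sum_distrib_left)
lemma Sb_const: "Sb n p (\<lambda>j. c) = c"
proof -
  have "Sb n p (\<lambda>j. c) = c * (\<Sum>j\<le>n. real (n choose j) * p ^ j * (1 - p) ^ (n - j))"
    unfolding Sb_def bw_def by (simp add: algebra_simps sum_distrib_left)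
  also have "(\<Sum>j\<le>n. real (n choose j) * p ^ j * (1 - p) ^ (n - j)) = (p + (1 - p)) ^ n"
    by (subst binomial_ring) (simp add: atLeast0AtMost)
  finally show ?thesis by simp
qed

lemma Sb_mono: "0 \<le> p \<Longrightarrow> p \<le> 1 \<Longrightarrow> (\<And>j. j \<le> n \<Longrightarrow> f j \<le> g j) \<Longrightarrow> Sb n p f \<le> Sb n p g"
  unfolding Sb_def bw_def by (intro sum_mono mult_left_mono) auto

lemma moments:
  fixes p :: real
  defines "q \<equiv> 1 - p"
  shows "Sb n p (\<lambda>j. real j - real n * p) = 0
    \<and> Sb n p (\<lambda>j. (real j - real n * p)^2) = real n * p * q
    \<and> Sb n p (\<lambda>j. (real j - real n * p)^3) = real n * p * q * (q - p)
    \<and> Sb n p (\<lambda>j. (real j - real n * p)^4) = real n * p * q + 3 * real n * (real n - 2) * p^2 * q^2"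
proof (induction n)
  case 0
  show ?case by (simp add: Sb_def bw_def)
next
  case (Suc n)
  define e where "e = (\<lambda>j. real j - real n * p)"
  have IH1: "Sb n p e = 0" and IH2: "Sb n p (\<lambda>j. e j ^ 2) = real n * p * q"
    and IH3: "Sb n p (\<lambda>j. e j ^ 3) = real n * p * q * (q - p)"
    and IH4: "Sb n p (\<lambda>j. e j ^ 4) = real n * p * q + 3 * real n * (real n - 2) * p^2 * q^2"
    using Suc.IH unfolding e_def by auto
  have h1: "(\<lambda>j. p * (real (Suc j) - real (Suc n) * p) + (1 - p) * (real j - real (Suc n) * p)) = (\<lambda>j. e j)"
    by (rule ext) (simp add: e_def algebra_simps)
  have h2: "(\<lambda>j. p * (real (Suc j) - real (Suc n) * p)^2 + (1 - p) * (real j - real (Suc n) * p)^2)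
      = (\<lambda>j. e j ^ 2 + p * q)"
    by (rule ext) (simp add: e_def q_def power2_eq_square algebra_simps)
  have h3: "(\<lambda>j. p * (real (Suc j) - real (Suc n) * p)^3 + (1 - p) * (real j - real (Suc n) * p)^3)
      = (\<lambda>j. e j ^ 3 + (3 * p * q) * e j + p * q * (q - p))"
    by (rule ext) (simp add: e_def q_def power3_eq_cube algebra_simps)
  have h4: "(\<lambda>j. p * (real (Suc j) - real (Suc n) * p)^4 + (1 - p) * (real j - real (Suc n) * p)^4)
      = (\<lambda>j. e j ^ 4 + (6 * p * q) * e j ^ 2 + (4 * p * q * (q - p)) * e j + p * q * (q^3 + p^3))"
    by (rule ext) (simp add: e_def q_def power4_eq_xxxx power3_eq_cube power2_eq_square algebra_simps)
  have r1: "Sb (Suc n) p (\<lambda>j. real j - real (Suc n) * p) = 0"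
    by (simp only: Sb_Suc h1 IH1)
  have r2: "Sb (Suc n) p (\<lambda>j. (real j - real (Suc n) * p)^2) = real (Suc n) * p * q"
    by (simp only: Sb_Suc h2 Sb_add Sb_const IH2) (simp add: algebra_simps)
  have r3: "Sb (Suc n) p (\<lambda>j. (real j - real (Suc n) * p)^3) = real (Suc n) * p * q * (q - p)"
    by (simp only: Sb_Suc h3 Sb_add Sb_const Sb_cmult IH3 IH1) (simp add: algebra_simps)
  have r4: "Sb (Suc n) p (\<lambda>j. (real j - real (Suc n) * p)^4) = real (Suc n) * p * q + 3 * real (Suc n) * (real (Suc n) - 2) * p^2 * q^2"
    apply (simp only: Sb_Suc h4 Sb_add Sb_const Sb_cmult IH4 IH2 IH1)
    apply (simp add: q_def power3_eq_cube power2_eq_square algebra_simps)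
    done
  show ?case using r1 r2 r3 r4 by blast
qed


definition Eb :: "nat \<Rightarrow> nat \<Rightarrow> real \<times> real \<Rightarrow> (nat \<Rightarrow> nat \<Rightarrow> real) \<Rightarrow> real" where
  "Eb N N2 x g = (\<Sum>j1\<le>N. \<Sum>j2\<le>N2. bw N (fst x) j1 * bw N2 (snd x) j2 * g j1 j2)"

lemma bern_Eb: "bern N N2 G x = Eb N N2 x (\<lambda>a b. G (real a / real N, real b / real N2))"
  unfolding bern_def Eb_def bw_def by (intro sum.cong refl) (simp add: algebra_simps)

lemma Eb_prod: "Eb N N2 x (\<lambda>a b. f a * g b) = Sb N (fst x) f * Sb N2 (snd x) g"
  unfolding Eb_def Sb_def sum_product by (intro sum.cong refl) (simp add: algebra_simps)

lemma Eb_left: "Eb N N2 x (\<lambda>a b. f a) = Sb N (fst x) f"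
  using Eb_prod[of N N2 x f "\<lambda>b. 1"] by (simp add: Sb_const)
lemma Eb_right: "Eb N N2 x (\<lambda>a b. g b) = Sb N2 (snd x) g"
  using Eb_prod[of N N2 x "\<lambda>a. 1" g] by (simp add: Sb_const)

lemma Eb_add: "Eb N N2 x (\<lambda>a b. f a b + g a b) = Eb N N2 x f + Eb N N2 x g"
  unfolding Eb_def by (simp add: algebra_simps sum.distrib)
lemma Eb_diff: "Eb N N2 x (\<lambda>a b. f a b - g a b) = Eb N N2 x f - Eb N N2 x g"
  unfolding Eb_def by (simp add: algebra_simps sum_subtractf)
lemma Eb_cmult: "Eb N N2 x (\<lambda>a b. c * f a b) = c * Eb N N2 x f"
  unfolding Eb_def by (simp add: algebra_simps sum_distrib_left)
lemma Eb_const: "Eb N N2 x (\<lambda>a b. c) = c"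
  using Eb_prod[of N N2 x "\<lambda>a. c" "\<lambda>b. 1"] by (simp add: Sb_const)
lemma Eb_mono: "x \<in> Dsq \<Longrightarrow> (\<And>a b. a \<le> N \<Longrightarrow> b \<le> N2 \<Longrightarrow> f a b \<le> g a b) \<Longrightarrow> Eb N N2 x f \<le> Eb N N2 x g"
  unfolding Eb_def bw_def Dsq_def
  by (intro sum_mono mult_left_mono) (auto simp: mem_Times_iff)

lemma Eb_s1: "Eb N N2 x (\<lambda>a b. (real a - real N * fst x) + (real b - real N2 * snd x)) = 0"
  using Eb_prod[of N N2 x "\<lambda>a. real a - real N * fst x" "\<lambda>b. 1"]
    Eb_prod[of N N2 x "\<lambda>a. 1" "\<lambda>b. real b - real N2 * snd x"] moments[of N "fst x"] moments[of N2 "snd x"]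
  by (simp add: Eb_add Sb_const)

lemma Eb_s2: "Eb N N2 x (\<lambda>a b. ((real a - real N * fst x) + (real b - real N2 * snd x))^2)
    = real N * fst x * (1 - fst x) + real N2 * snd x * (1 - snd x)"
proof -
  have e: "(\<lambda>a b. ((real a - real N * fst x) + (real b - real N2 * snd x))^2) =
     (\<lambda>a b. (real a - real N * fst x)^2 + (2 * ((real a - real N * fst x) * (real b - real N2 * snd x)) + (real b - real N2 * snd x)^2))"
    by (intro ext) (simp add: power2_eq_square algebra_simps)
  show ?thesis unfolding e Eb_add Eb_cmult Eb_prod Eb_left Eb_right using moments[of N "fst x"] moments[of N2 "snd x"]
    by (simp add: Sb_const)
qed

lemma pow4_le: "((a::real) + b)^4 \<le> 8 * (a^4 + b^4)"
proof -
  have e: "8 * (a^4 + b^4) - (a + b)^4 = (a-b)^2 * (5*(a+b)^2 + 2*a^2 + 2*b^2)"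
    by (simp add: power2_eq_square power4_eq_xxxx algebra_simps)
  have "0 \<le> (a-b)^2 * (5*(a+b)^2 + 2*a^2 + 2*b^2)" by simp
  thus ?thesis using e by linarith
qed

lemma M4_le: "0 \<le> p \<Longrightarrow> p \<le> 1 \<Longrightarrow> Sb n p (\<lambda>j. (real j - real n * p)^4) \<le> real n ^ 2"
proof -
  assume p: "0 \<le> p" "p \<le> 1"
  define t where "t = p * (1 - p)"
  have t0: "0 \<le> t" using p by (simp add: t_def)
  have t1: "t \<le> 1/4" unfolding t_def using zero_le_square[of "p - 1/2"] by (simp add: power2_eq_square algebra_simps)
  have "Sb n p (\<lambda>j. (real j - real n * p)^4) = real n * t + 3 * (real n * (real n - 2)) * t^2"
    using moments[of n p] by (simp add: t_def power2_eq_square algebra_simps)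
  also have "\<dots> \<le> real n * t + 3 * (real n * real n) * t^2"
    using t0 by (intro add_left_mono mult_right_mono) (auto simp: algebra_simps)
  also have "\<dots> \<le> real n * (1/4) + 3 * (real n * real n) * (1/4)^2"
  proof (intro add_mono mult_left_mono)
    show "t^2 \<le> (1/4)^2" using t0 t1 by (intro power_mono) auto
  qed (use t0 t1 in auto)
  also have "\<dots> \<le> real n ^ 2"
  proof (cases "n = 0")
    case False
    hence "1 * real n \<le> real n * real n" by (intro mult_right_mono) auto
    thus ?thesis by (simp add: power2_eq_square)
  qed simp
  finally show ?thesis .
qed

lemma Eb_s4: assumes "x \<in> Dsq"
  shows "Eb N N2 x (\<lambda>a b. ((real a - real N * fst x) + (real b - real N2 * snd x))^4)
    \<le> 8 * (real N ^ 2 + real N2 ^ 2)"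
proof -
  have x: "0 \<le> fst x" "fst x \<le> 1" "0 \<le> snd x" "snd x \<le> 1" using assms by (auto simp: Dsq_def mem_Times_iff)
  have "Eb N N2 x (\<lambda>a b. ((real a - real N * fst x) + (real b - real N2 * snd x))^4)
     \<le> Eb N N2 x (\<lambda>a b. 8 * ((real a - real N * fst x)^4 + (real b - real N2 * snd x)^4))"
    by (intro Eb_mono assms) (rule pow4_le)
  also have "\<dots> = 8 * (Sb N (fst x) (\<lambda>j. (real j - real N * fst x)^4) + Sb N2 (snd x) (\<lambda>j. (real j - real N2 * snd x)^4))"
    unfolding Eb_cmult Eb_add Eb_left Eb_right by simp
  also have "\<dots> \<le> 8 * (real N ^ 2 + real N2 ^ 2)"
    using M4_le[of "fst x" N] M4_le[of "snd x" N2] x by simp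
  finally show ?thesis .
qed

lemma ln_le_P: fixes t :: real assumes "0 < t" shows "ln t \<le> (t-1) - (t-1)^2/2 + (t-1)^3/3"
proof -
  define g where "g = (\<lambda>t::real. (t-1) - (t-1)^2/2 + (t-1)^3/3 - ln t)"
  define g' where "g' = (\<lambda>t::real. 1 - (t-1) + (t-1)^2 - 1/t)"
  have D: "\<And>x. 0 < x \<Longrightarrow> (g has_real_derivative g' x) (at x)"
    unfolding g_def g'_def by (rule derivative_eq_intros refl | simp)+ (simp add: power2_eq_square field_simps)
  have g'_eq: "\<And>x. 0 < x \<Longrightarrow> g' x = (x-1)^3 / x"
    unfolding g'_def by (simp add: power2_eq_square power3_eq_cube field_simps)
  have g1: "g 1 = 0" by (simp add: g_def)
  have "0 \<le> g t"
  proof (cases "t = 1")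
    case True thus ?thesis by (simp add: g1)
  next
    case False
    show ?thesis
    proof (cases "t > 1")
      case True
      obtain \<xi> where "1 < \<xi>" "\<xi> < t" "g t - g 1 = (t - 1) * g' \<xi>"
        using MVT2[of 1 t g g'] True D by auto
      moreover have "0 \<le> g' \<xi>" using g'_eq[of \<xi>] \<open>1 < \<xi>\<close> by simp
      ultimately show ?thesis using g1 True by simp
    next
      case False': False
      hence "t < 1" using False by simp
      obtain \<xi> where "t < \<xi>" "\<xi> < 1" "g 1 - g t = (1 - t) * g' \<xi>"
        using MVT2[of t 1 g g'] \<open>t < 1\<close> D assms by force
      moreover have "g' \<xi> \<le> 0" using g'_eq[of \<xi>] \<open>t < \<xi>\<close> \<open>\<xi> < 1\<close> assms
        by (simp add: divide_nonpos_pos)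
      moreover have "0 \<le> 1 - t" using \<open>t < 1\<close> by simp
      ultimately show ?thesis using g1 by (smt (verit) mult_nonneg_nonpos)
    qed
  qed
  thus ?thesis by (simp add: g_def)
qed

definition Pp :: "real \<Rightarrow> real" where "Pp e = e - e^2/2 + e^3/3"

lemma xlnx_le: assumes "0 \<le> u" "0 < z" shows "u * ln u \<le> u * ln z + u * Pp ((u - z)/z)"
proof (cases "u = 0")
  case False
  hence u: "0 < u" using assms by simp
  have "ln u = ln z + ln (u/z)" using u assms by (simp add: ln_div)
  moreover have "ln (u/z) \<le> Pp ((u-z)/z)"
    using ln_le_P[of "u/z"] u assms unfolding Pp_def by (simp add: diff_divide_distrib)
  ultimately have "ln u \<le> ln z + Pp ((u - z)/z)" by simp
  hence "u * ln u \<le> u * (ln z + Pp ((u - z)/z))" using u by (intro mult_left_mono) auto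
  thus ?thesis by (simp add: algebra_simps)
qed simp


lemma poly_half: fixes z s :: real assumes "z \<noteq> 0"
  shows "(z + s) * Pp (s / z) = s + s^2/(2*z) - s^3/(6*z^2) + s^4/(3*z^3)"
  using assms unfolding Pp_def
  by (simp add: field_simps power2_eq_square power3_eq_cube power4_eq_xxxx)

lemma poly_id:
  fixes z s :: real
  assumes "0 < z" "z < 1"
  shows "(z + s) * Pp (s / z) + (1 - z - s) * Pp (- s / (1 - z))
     = s^2 / (2 * z * (1 - z)) + (1/(6*(1-z)^2) - 1/(6*z^2)) * s^3 + (1/(3*z^3) + 1/(3*(1-z)^3)) * s^4"
proof -
  have 1: "(z + s) * Pp (s / z) = s + s^2/(2*z) - s^3/(6*z^2) + s^4/(3*z^3)" using assms by (intro poly_half) auto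
  have 2: "((1 - z) + (-s)) * Pp ((-s) / (1-z)) = (-s) + (-s)^2/(2*(1-z)) - (-s)^3/(6*(1-z)^2) + (-s)^4/(3*(1-z)^3)"
    using assms by (intro poly_half) auto
  have 3: "s^2/(2*z) + s^2/(2*(1-z)) = s^2 / (2 * z * (1 - z))" using assms by (simp add: field_simps)
  show ?thesis using 1 2 3 by (simp add: algebra_simps diff_divide_distrib add_divide_distrib)
qed

lemma amgm3: fixes c s zw \<delta> :: real assumes "0 < zw" "0 < \<delta>"
  shows "2 * c * s^3 \<le> \<delta> * s^2 / zw + c^2 * zw / \<delta> * s^4"
proof -
  have "0 \<le> (\<delta> * s - c * zw * s^2)^2 / (\<delta> * zw)" using assms by simp
  also have "(\<delta> * s - c * zw * s^2)^2 / (\<delta> * zw) = \<delta> * s^2 / zw + c^2 * zw / \<delta> * s^4 - 2 * c * s^3"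
    using assms by (simp add: field_simps power2_eq_square power3_eq_cube power4_eq_xxxx)
  finally show ?thesis by simp
qed


lemma H_lower:
  fixes a z u \<delta> :: real
  assumes a: "0 < a" "a \<le> z" "z \<le> 1 - a" and u: "0 \<le> u" "u \<le> 1" and d: "0 < \<delta>"
  shows "Hfun z - 2 * (ln z - ln (1 - z)) * (u - z) - (1 + \<delta>) * (u - z)^2 / (z * (1 - z))
           - (2 / a^3 + 1 / (a^4 * \<delta>)) * (u - z)^4 \<le> Hfun u"
proof -
  define s where "s = u - z"
  define w where "w = 1 - z"
  have z0: "0 < z" and w0: "0 < w" and z1: "z < 1" using a by (auto simp: w_def)
  have uzs: "u = z + s" and uw: "1 - u = 1 - z - s" by (auto simp: s_def)
  define c3 where "c3 = 1/(6*(1-z)^2) - 1/(6*z^2)"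
  define c4 where "c4 = 1/(3*z^3) + 1/(3*(1-z)^3)"
  have A: "u * ln u \<le> u * ln z + u * Pp ((u - z)/z)" using xlnx_le[of u z] u z0 by simp
  have B: "(1 - u) * ln (1 - u) \<le> (1 - u) * ln w + (1 - u) * Pp (((1 - u) - w)/w)"
    using xlnx_le[of "1 - u" w] u w0 by simp
  have B': "((1 - u) - w)/w = - s / (1 - z)" by (simp add: s_def w_def)
  have P: "u * Pp ((u - z)/z) + (1 - u) * Pp (- s / (1 - z)) = s^2 / (2 * z * w) + c3 * s^3 + c4 * s^4"
    using poly_id[of z s] z0 z1 unfolding uw c3_def c4_def w_def by (simp add: s_def)
  have lin: "-2 * (u * ln z + (1 - u) * ln w) = Hfun z - 2 * (ln z - ln (1 - z)) * (u - z)"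
    unfolding Hfun_def w_def by (simp add: algebra_simps)
  have Hu: "Hfun u \<ge> Hfun z - 2 * (ln z - ln (1 - z)) * (u - z) - 2 * (s^2 / (2 * z * w) + c3 * s^3 + c4 * s^4)"
    using A B B' P lin unfolding Hfun_def by (simp add: algebra_simps)
  have am: "2 * c3 * s^3 \<le> \<delta> * s^2 / (z*w) + c3^2 * (z*w) / \<delta> * s^4"
    by (rule amgm3) (use z0 w0 d in auto)
  have iz: "1/z \<le> 1/a" "0 < 1/z" using a z0 by (auto simp: frac_le)
  have iw: "1/w \<le> 1/a" "0 < 1/w" using a w0 by (auto simp: frac_le w_def)
  have c4b: "2 * c4 \<le> 2 / a^3"
  proof -
    have "(1/z)^3 \<le> (1/a)^3" "(1/w)^3 \<le> (1/a)^3" using iz iw by (intro power_mono; simp)+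
    moreover have "2 * c4 = 2/3 * (1/z)^3 + 2/3 * (1/w)^3" unfolding c4_def w_def by (simp add: power_divide)
    moreover have "0 \<le> (1/a)^3" using a by simp
    moreover have "2 / a^3 = 2 * (1/a)^3" by (simp add: power_divide)
    ultimately show ?thesis by linarith
  qed
  have c3b: "c3^2 * (z*w) / \<delta> \<le> 1 / (a^4 * \<delta>)"
  proof -
    have "(1/z)^2 \<le> (1/a)^2" "(1/w)^2 \<le> (1/a)^2" using iz iw by (intro power_mono; simp)+
    moreover have "c3 = (1/w)^2/6 - (1/z)^2/6" by (simp add: c3_def w_def power_divide)
    moreover have "0 \<le> (1/w)^2" "0 \<le> (1/z)^2" by simp_all
    ultimately have "\<bar>c3\<bar> \<le> (1/a)^2" by (simp only: abs_le_iff) linarith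
    hence "c3^2 \<le> ((1/a)^2)^2" by (metis abs_ge_zero power2_abs power_mono)
    moreover have "z * w \<le> 1" using z0 z1 w0 by (intro mult_le_one) (auto simp: w_def)
    ultimately have "c3^2 * (z*w) \<le> ((1/a)^2)^2 * 1" using z0 w0 by (intro mult_mono) auto
    hence "c3^2 * (z*w) / \<delta> \<le> ((1/a)^2)^2 / \<delta>" using d by (intro divide_right_mono) auto
    also have "((1/a)^2)^2 / \<delta> = 1 / (a^4 * \<delta>)" by (simp add: power_divide flip: power_mult)
    finally show ?thesis .
  qed
  have s4: "0 \<le> s^4" by (simp add: zero_le_even_power)
  have c34: "(2 * c4 + c3^2 * (z*w) / \<delta>) * s^4 \<le> (2 / a^3 + 1 / (a^4 * \<delta>)) * s^4"
    using c4b c3b s4 by (intro mult_right_mono) auto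
  have "2 * (s^2 / (2 * z * w) + c3 * s^3 + c4 * s^4) \<le> (1 + \<delta>) * s^2 / (z * w) + (2 / a^3 + 1 / (a^4 * \<delta>)) * s^4"
  proof -
    have e1: "2 * (s^2 / (2 * z * w) + c3 * s^3 + c4 * s^4) = s^2/(z*w) + 2 * c3 * s^3 + 2 * c4 * s^4"
      by (simp add: algebra_simps)
    have e2: "(1 + \<delta>) * s^2 / (z * w) = s^2/(z*w) + \<delta> * s^2 / (z*w)" by (simp add: algebra_simps add_divide_distrib)
    have e3: "(2 * c4 + c3^2 * (z*w) / \<delta>) * s^4 = 2 * c4 * s^4 + c3^2 * (z*w) / \<delta> * s^4" by (simp add: algebra_simps)
    show ?thesis unfolding e1 e2 using am c34 e3 by linarith
  qed
  thus ?thesis using Hu unfolding s_def w_def by linarith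
qed

lemma taulow_A: "taulow d (Amap d \<kappa> N y) = taulow d y"
  unfolding taulow_def Amap_def Mmap_def by (simp add: algebra_simps)

lemma jensen_id:
  fixes P Q x y :: real assumes "0 < P + Q"
  shows "(P+Q) * (((P*x+Q*y)/(P+Q)) * (1 - (P*x+Q*y)/(P+Q))) - (P*x*(1-x) + Q*y*(1-y)) = P*Q*(x-y)^2/(P+Q)"
proof -
  define m where "m = (P*x+Q*y)/(P+Q)"
  have m: "(P+Q) * m = P*x+Q*y" using assms by (simp add: m_def)
  have "(P+Q) * (m * (1 - m)) - (P*x*(1-x) + Q*y*(1-y)) = P*x^2 + Q*y^2 - (P*x+Q*y) * m"
    using m by (simp add: algebra_simps power2_eq_square)
  also have "\<dots> = ((P*x^2 + Q*y^2) * (P+Q) - (P*x+Q*y)^2) / (P+Q)"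
    using assms by (simp add: m_def field_simps power2_eq_square)
  also have "(P*x^2 + Q*y^2) * (P+Q) - (P*x+Q*y)^2 = P*Q*(x-y)^2"
    by (simp add: algebra_simps power2_eq_square)
  finally show ?thesis by (simp add: m_def)
qed

lemma genq_taulow_lower:
  fixes d \<kappa> a \<delta> :: real and N N2 :: nat and x :: "real \<times> real"
  assumes d: "0 < d" and N: "0 < N" and N2: "real N2 = d * real N" and x: "x \<in> Dsq"
    and a: "0 < a" "a \<le> (fst x + d * snd x) / (1 + d)" "(fst x + d * snd x) / (1 + d) \<le> 1 - a"
    and del: "0 < \<delta>"
  shows "- (1 + \<delta>) - 8 * (2 / a^3 + 1 / (a^4 * \<delta>)) / real N \<le> genq d \<kappa> N N2 (taulow d) x"
proof -
  define z where "z = (fst x + d * snd x) / (1 + d)"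
  define D where "D = real N + real N2"
  define Ca where "Ca = 2 / a^3 + 1 / (a^4 * \<delta>)"
  define \<beta> where "\<beta> = 2 * (ln z - ln (1 - z))"
  define S where "S = (\<lambda>j1 j2. (real j1 - real N * fst x) + (real j2 - real N2 * snd x))"
  define V where "V = real N * fst x * (1 - fst x) + real N2 * snd x * (1 - snd x)"
  have x01: "0 \<le> fst x" "fst x \<le> 1" "0 \<le> snd x" "snd x \<le> 1" using x by (auto simp: Dsq_def mem_Times_iff)
  have Npos: "0 < real N" using N by simp
  have N2pos: "0 < real N2" using N2 d Npos by simp
  have Dpos: "0 < D" using Npos N2pos by (simp add: D_def)
  have DN: "D = (1 + d) * real N" using N2 by (simp add: D_def algebra_simps)
  have zD: "z = (real N * fst x + real N2 * snd x) / D"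
  proof -
    have "real N * fst x + real N2 * snd x = real N * (fst x + d * snd x)" using N2 by (simp add: algebra_simps)
    moreover have "D = real N * (1 + d)" using DN by simp
    ultimately show ?thesis unfolding z_def using Npos by simp
  qed
  have za: "a \<le> z" "z \<le> 1 - a" using a by (simp_all add: z_def)
  have z01: "0 < z" "z < 1" using za a by auto
  have uval: "\<And>j1 j2. taulow d (Amap d \<kappa> N (real j1 / real N, real j2 / real N2)) = (d + 1) * Hfun ((real j1 + real j2) / D)"
  proof -
    fix j1 j2 :: nat
    have "(real j1 / real N + d * (real j2 / real N2)) / (1 + d) = (real j1 + real j2) / D"
      unfolding DN using Npos N2pos d N2 by (simp add: field_simps)
    thus "taulow d (Amap d \<kappa> N (real j1 / real N, real j2 / real N2)) = (d + 1) * Hfun ((real j1 + real j2) / D)"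
      unfolding taulow_A by (simp add: taulow_def)
  qed
  have bern_eq: "bern N N2 (taulow d \<circ> Amap d \<kappa> N) x = (d + 1) * Eb N N2 x (\<lambda>j1 j2. Hfun ((real j1 + real j2) / D))"
    unfolding bern_Eb by (simp add: uval Eb_cmult)
  have pw: "\<And>j1 j2. j1 \<le> N \<Longrightarrow> j2 \<le> N2 \<Longrightarrow>
      Hfun z - (\<beta> / D) * S j1 j2 - ((1 + \<delta>) / (z * (1 - z) * D^2)) * (S j1 j2)^2 - (Ca / D^4) * (S j1 j2)^4
      \<le> Hfun ((real j1 + real j2) / D)"
  proof -
    fix j1 j2 :: nat assume j: "j1 \<le> N" "j2 \<le> N2"
    define u where "u = (real j1 + real j2) / D"
    have u01: "0 \<le> u" "u \<le> 1" unfolding u_def using j Dpos by (auto simp: D_def field_simps)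
    have us: "u - z = S j1 j2 / D" unfolding u_def zD S_def using Dpos by (simp add: field_simps)
    have "Hfun z - \<beta> * (u - z) - (1 + \<delta>) * (u - z)^2 / (z * (1 - z)) - Ca * (u - z)^4 \<le> Hfun u"
      using H_lower[OF a(1) za u01 del] unfolding Ca_def \<beta>_def by simp
    moreover have "\<beta> * (u - z) = (\<beta> / D) * S j1 j2" using us by simp
    moreover have "(1 + \<delta>) * (u - z)^2 / (z * (1 - z)) = ((1 + \<delta>) / (z * (1 - z) * D^2)) * (S j1 j2)^2"
      using us by (simp add: power_divide)
    moreover have "Ca * (u - z)^4 = (Ca / D^4) * (S j1 j2)^4" using us by (simp add: power_divide)
    ultimately show "Hfun z - (\<beta> / D) * S j1 j2 - ((1 + \<delta>) / (z * (1 - z) * D^2)) * (S j1 j2)^2 - (Ca / D^4) * (S j1 j2)^4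
      \<le> Hfun ((real j1 + real j2) / D)" by (simp add: u_def)
  qed
  have E1: "Eb N N2 x S = 0" unfolding S_def by (rule Eb_s1)
  have E2: "Eb N N2 x (\<lambda>a b. (S a b)^2) = V" unfolding S_def V_def by (rule Eb_s2)
  have E4: "Eb N N2 x (\<lambda>a b. (S a b)^4) \<le> 8 * (real N ^ 2 + real N2 ^ 2)" unfolding S_def by (rule Eb_s4[OF x])
  have lowE: "Eb N N2 x (\<lambda>j1 j2. Hfun z - (\<beta> / D) * S j1 j2 - ((1 + \<delta>) / (z * (1 - z) * D^2)) * (S j1 j2)^2 - (Ca / D^4) * (S j1 j2)^4)
     = Hfun z - (\<beta> / D) * Eb N N2 x S - ((1 + \<delta>) / (z * (1 - z) * D^2)) * Eb N N2 x (\<lambda>a b. (S a b)^2)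
        - (Ca / D^4) * Eb N N2 x (\<lambda>a b. (S a b)^4)"
    by (simp only: Eb_diff Eb_cmult Eb_const)
  have EH: "Hfun z - ((1 + \<delta>) / (z * (1 - z) * D^2)) * V - (Ca / D^4) * (8 * (real N ^ 2 + real N2 ^ 2))
      \<le> Eb N N2 x (\<lambda>j1 j2. Hfun ((real j1 + real j2) / D))"
  proof -
    have Ca0: "0 \<le> Ca / D^4" using a del Dpos by (simp add: Ca_def)
    have "Hfun z - ((1 + \<delta>) / (z * (1 - z) * D^2)) * V - (Ca / D^4) * (8 * (real N ^ 2 + real N2 ^ 2))
       \<le> Hfun z - ((1 + \<delta>) / (z * (1 - z) * D^2)) * V - (Ca / D^4) * Eb N N2 x (\<lambda>a b. (S a b)^4)"
      using mult_left_mono[OF E4 Ca0] by linarith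
    also have "\<dots> = Eb N N2 x (\<lambda>j1 j2. Hfun z - (\<beta> / D) * S j1 j2 - ((1 + \<delta>) / (z * (1 - z) * D^2)) * (S j1 j2)^2 - (Ca / D^4) * (S j1 j2)^4)"
      unfolding lowE E1 E2 by simp
    also have "\<dots> \<le> Eb N N2 x (\<lambda>j1 j2. Hfun ((real j1 + real j2) / D))"
      by (rule Eb_mono[OF x]) (rule pw)
    finally show ?thesis .
  qed
  have genq_eq: "genq d \<kappa> N N2 (taulow d) x = D * (Eb N N2 x (\<lambda>j1 j2. Hfun ((real j1 + real j2) / D)) - Hfun z)"
    unfolding genq_def bern_eq DN by (simp add: taulow_def z_def algebra_simps)
  have jensen: "V \<le> D * (z * (1 - z))"
  proof -
    have "D * (z * (1 - z)) - V = real N * real N2 * (fst x - snd x)^2 / D"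
      unfolding zD V_def using jensen_id[of "real N" "real N2" "fst x" "snd x"] Dpos by (simp add: D_def)
    moreover have "0 \<le> real N * real N2 * (fst x - snd x)^2 / D" using Dpos by simp
    ultimately show ?thesis by linarith
  qed
  have t1: "D * (((1 + \<delta>) / (z * (1 - z) * D^2)) * V) \<le> 1 + \<delta>"
  proof -
    have "D * (((1 + \<delta>) / (z * (1 - z) * D^2)) * V) = (1 + \<delta>) * (V / (D * (z * (1 - z))))"
      using Dpos z01 by (simp add: field_simps power2_eq_square)
    also have "\<dots> \<le> (1 + \<delta>) * 1"
      using jensen Dpos z01 del by (intro mult_left_mono) (auto simp: divide_le_eq_1)
    finally show ?thesis by simp
  qed
  have t2: "D * ((Ca / D^4) * (8 * (real N ^ 2 + real N2 ^ 2))) \<le> 8 * Ca / real N"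
  proof -
    have "real N ^ 2 + real N2 ^ 2 \<le> D^2" unfolding D_def using Npos N2pos by (simp add: power2_eq_square algebra_simps)
    hence "D * ((Ca / D^4) * (8 * (real N ^ 2 + real N2 ^ 2))) \<le> D * ((Ca / D^4) * (8 * D^2))"
      using Dpos a del by (intro mult_left_mono) (auto simp: Ca_def)
    also have "\<dots> = 8 * Ca / D" using Dpos by (simp add: field_simps power2_eq_square power4_eq_xxxx)
    also have "\<dots> \<le> 8 * Ca / real N"
      using Dpos Npos N2pos a del by (intro divide_left_mono) (auto simp: Ca_def D_def)
    finally show ?thesis .
  qed
  have "D * (Eb N N2 x (\<lambda>j1 j2. Hfun ((real j1 + real j2) / D)) - Hfun z)
     \<ge> D * (- ((1 + \<delta>) / (z * (1 - z) * D^2)) * V - (Ca / D^4) * (8 * (real N ^ 2 + real N2 ^ 2)))"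
    using EH Dpos by (intro mult_left_mono) auto
  hence "genq d \<kappa> N N2 (taulow d) x \<ge> - (D * (((1 + \<delta>) / (z * (1 - z) * D^2)) * V)) - D * ((Ca / D^4) * (8 * (real N ^ 2 + real N2 ^ 2)))"
    unfolding genq_eq by (simp add: algebra_simps)
  thus ?thesis using t1 t2 unfolding Ca_def by linarith
qed

definition Hd :: "real \<Rightarrow> real" where "Hd z = -2 * (ln z - ln (1 - z))"
definition Hdd :: "real \<Rightarrow> real" where "Hdd z = -2 * (1/z + 1/(1 - z))"

lemma Hfun_deriv: "0 < z \<Longrightarrow> z < 1 \<Longrightarrow> (Hfun has_real_derivative Hd z) (at z)"
  unfolding Hfun_def[abs_def] Hd_def
  by (rule derivative_eq_intros refl | simp)+

lemma Hd_deriv: "0 < z \<Longrightarrow> z < 1 \<Longrightarrow> (Hd has_real_derivative Hdd z) (at z)"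
  unfolding Hd_def[abs_def] Hdd_def
  by (rule derivative_eq_intros refl | simp)+

lemma gen_deriv:
  fixes d c k t0 :: real
  assumes d: "0 < d" and t0: "0 < (c + k*t0)/(1+d)" "(c + k*t0)/(1+d) < 1"
  defines "f \<equiv> (\<lambda>t. (d+1) * Hfun ((c + k*t)/(1+d)))"
  shows "deriv f t0 = k * Hd ((c + k*t0)/(1+d))"
    and "deriv (\<lambda>s. deriv f s) t0 = k^2/(1+d) * Hdd ((c + k*t0)/(1+d))"
proof -
  define U where "U = {t. 0 < (c + k*t)/(1+d) \<and> (c + k*t)/(1+d) < 1}"
  have "open U" unfolding U_def
    by (intro open_Collect_conj open_Collect_less continuous_intros) (use d in auto)
  have t0U: "t0 \<in> U" using t0 by (simp add: U_def)
  have D1: "(f has_real_derivative k * Hd ((c + k*t)/(1+d))) (at t)" if "t \<in> U" for t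
  proof -
    have zz: "0 < (c + k*t)/(1+d)" "(c + k*t)/(1+d) < 1" using that by (auto simp: U_def)
    have "((\<lambda>t. c + k*t) has_real_derivative k) (at t)"
      by (auto intro!: derivative_eq_intros)
    from DERIV_cdivide[OF this, of "1+d"]
    have "((\<lambda>t. (c + k*t)/(1+d)) has_real_derivative k/(1+d)) (at t)" .
    from DERIV_chain2[OF Hfun_deriv[OF zz] this]
    have "((\<lambda>t. Hfun ((c + k*t)/(1+d))) has_real_derivative Hd ((c + k*t)/(1+d)) * (k/(1+d))) (at t)" .
    from DERIV_cmult[OF this, of "d+1"]
    have "(f has_real_derivative (d+1) * (Hd ((c + k*t)/(1+d)) * (k/(1+d)))) (at t)" unfolding f_def .
    moreover have "(d+1) * (Hd ((c + k*t)/(1+d)) * (k/(1+d))) = k * Hd ((c + k*t)/(1+d))"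
      using d by (simp add: field_simps)
    ultimately show ?thesis by simp
  qed
  show "deriv f t0 = k * Hd ((c + k*t0)/(1+d))" using D1[OF t0U] by (rule DERIV_imp_deriv)
  have D2: "((\<lambda>y. k * Hd ((c + k*y)/(1+d))) has_real_derivative (k^2/(1+d) * Hdd ((c + k*t0)/(1+d)))) (at t0)"
  proof -
    have "((\<lambda>t. c + k*t) has_real_derivative k) (at t0)"
      by (auto intro!: derivative_eq_intros)
    from DERIV_cdivide[OF this, of "1+d"]
    have "((\<lambda>t. (c + k*t)/(1+d)) has_real_derivative k/(1+d)) (at t0)" .
    from DERIV_chain2[OF Hd_deriv[OF t0] this]
    have "((\<lambda>t. Hd ((c + k*t)/(1+d))) has_real_derivative Hdd ((c + k*t0)/(1+d)) * (k/(1+d))) (at t0)" .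
    from DERIV_cmult[OF this, of k] show ?thesis
      by (simp add: field_simps power2_eq_square)
  qed
  have "((\<lambda>s. deriv f s) has_real_derivative (k^2/(1+d) * Hdd ((c + k*t0)/(1+d)))) (at t0)"
    by (rule has_field_derivative_transform_within_open[OF D2 \<open>open U\<close> t0U])
       (simp add: DERIV_imp_deriv[OF D1])
  thus "deriv (\<lambda>s. deriv f s) t0 = k^2/(1+d) * Hdd ((c + k*t0)/(1+d))" by (rule DERIV_imp_deriv)
qed

lemma part1:
  fixes d \<kappa> :: real
  assumes d: "0 < d" and x: "x \<in> Dsq - {(0,0), (1,1)}"
  shows "- Ld d \<kappa> (taulow d) x \<le> 1"
proof -
  obtain x1 x2 where xx: "x = (x1, x2)" by (cases x)
  have r: "0 \<le> x1" "x1 \<le> 1" "0 \<le> x2" "x2 \<le> 1" "\<not> (x1 = 0 \<and> x2 = 0)" "\<not> (x1 = 1 \<and> x2 = 1)"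
    using x by (auto simp: xx Dsq_def)
  define z where "z = (x1 + d * x2)/(1+d)"
  have z0: "0 < z"
  proof -
    have "0 < x1 + d * x2"
    proof (cases "x1 = 0")
      case True
      hence "0 < x2" using r by auto
      thus ?thesis using True d by simp
    next
      case False
      hence "0 < x1" using r by auto
      moreover have "0 \<le> d * x2" using r d by simp
      ultimately show ?thesis by simp
    qed
    thus ?thesis using d by (simp add: z_def)
  qed
  have z1: "z < 1"
  proof -
    have "x1 + d * x2 < 1 + d"
    proof (cases "x1 = 1")
      case True
      hence "x2 < 1" using r by auto
      hence "d * x2 < d * 1" using d by (intro mult_strict_left_mono) auto
      thus ?thesis using True by simp
    next
      case False
      hence "x1 < 1" using r by auto
      moreover have "d * x2 \<le> d * 1" using r d by (intro mult_left_mono) auto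
      ultimately show ?thesis by simp
    qed
    thus ?thesis using d by (simp add: z_def)
  qed
  have f1: "(\<lambda>t. taulow d (t, x2)) = (\<lambda>t. (d+1) * Hfun ((d * x2 + 1 * t)/(1+d)))"
    by (simp add: taulow_def[abs_def] add.commute)
  have f2: "(\<lambda>t. taulow d (x1, t)) = (\<lambda>t. (d+1) * Hfun ((x1 + d * t)/(1+d)))"
    by (simp add: taulow_def[abs_def])
  have zc1: "0 < (d * x2 + 1 * x1)/(1+d)" "(d * x2 + 1 * x1)/(1+d) < 1" using z0 z1 by (simp_all add: z_def add.commute)
  have zc2: "0 < (x1 + d * x2)/(1+d)" "(x1 + d * x2)/(1+d) < 1" using z0 z1 by (simp_all add: z_def)
  have e1: "(d * x2 + 1 * x1)/(1+d) = z" by (simp add: z_def add.commute)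
  have e2: "(x1 + d * x2)/(1+d) = z" by (simp add: z_def)
  have "deriv (\<lambda>t. taulow d (t, x2)) x1 = Hd z"
    using gen_deriv(1)[OF d zc1] unfolding f1 e1 by simp
  hence D1: "d1 (taulow d) x = Hd z" by (simp add: d1_def xx)
  have "deriv (\<lambda>t. deriv (\<lambda>s. taulow d (s, x2)) t) x1 = Hdd z / (1+d)"
    using gen_deriv(2)[OF d zc1] unfolding f1 e1 by simp
  hence D11: "d11 (taulow d) x = Hdd z / (1+d)" by (simp add: d11_def xx)
  have "deriv (\<lambda>t. taulow d (x1, t)) x2 = d * Hd z"
    using gen_deriv(1)[OF d zc2] unfolding f2 e2 by simp
  hence D2: "d2 (taulow d) x = d * Hd z" by (simp add: d2_def xx)
  have "deriv (\<lambda>t. deriv (\<lambda>s. taulow d (x1, s)) t) x2 = d^2/(1+d) * Hdd z"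
    using gen_deriv(2)[OF d zc2] unfolding f2 e2 by simp
  hence D22: "d22 (taulow d) x = d^2/(1+d) * Hdd z" by (simp add: d22_def xx)
  have L: "Ld d \<kappa> (taulow d) x = Hdd z * (x1 * (1 - x1) + d * (x2 * (1 - x2))) / (2 * (1 + d))"
  proof -
    have dn: "d \<noteq> 0" "1 + d \<noteq> 0" "d * 2 + d * (d * 2) \<noteq> 0"
      using d by (auto, smt (verit) mult_pos_pos)
    have t1: "x1 * (1 - x1) / 2 * (Hdd z / (1 + d)) = Hdd z * (x1 * (1 - x1)) / (2 * (1 + d))"
      using dn by (simp add: field_simps)
    have t2: "x2 * (1 - x2) / (2 * d) * (d^2 / (1 + d) * Hdd z) = Hdd z * (d * (x2 * (1 - x2))) / (2 * (1 + d))"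
      using dn by (simp add: field_simps power2_eq_square)
    have t3: "(d * x1 - d * x2) * Hd z + (- x1 + x2) * (d * Hd z) = 0" by (simp add: algebra_simps)
    have "Ld d \<kappa> (taulow d) x = x1 * (1 - x1) / 2 * (Hdd z / (1 + d)) + x2 * (1 - x2) / (2 * d) * (d^2 / (1 + d) * Hdd z)
        - \<kappa> * ((d * x1 - d * x2) * Hd z + (- x1 + x2) * (d * Hd z))"
      unfolding Ld_def D1 D11 D2 D22 by (simp add: xx Mmap_def)
    also have "\<dots> = Hdd z * (x1 * (1 - x1)) / (2 * (1 + d)) + Hdd z * (d * (x2 * (1 - x2))) / (2 * (1 + d))"
      unfolding t1 t2 t3 by simp
    also have "\<dots> = Hdd z * (x1 * (1 - x1) + d * (x2 * (1 - x2))) / (2 * (1 + d))"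
      by (simp add: add_divide_distrib[symmetric] distrib_left)
    finally show ?thesis .
  qed
  have Hdd_eq: "Hdd z = -2 / (z * (1 - z))" using z0 z1 by (simp add: Hdd_def field_simps)
  have jen: "x1 * (1 - x1) + d * (x2 * (1 - x2)) \<le> (1 + d) * (z * (1 - z))"
  proof -
    have "(1 + d) * (((1*x1+d*x2)/(1+d)) * (1 - (1*x1+d*x2)/(1+d))) - (1*x1*(1-x1) + d*x2*(1-x2)) = 1*d*(x1-x2)^2/(1+d)"
      by (rule jensen_id) (use d in simp)
    moreover have "0 \<le> 1*d*(x1-x2)^2/(1+d)" using d by simp
    ultimately show ?thesis by (simp add: z_def algebra_simps)
  qed
  have "- Ld d \<kappa> (taulow d) x = (x1 * (1 - x1) + d * (x2 * (1 - x2))) / ((1 + d) * (z * (1 - z)))"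
  proof -
    have gen: "\<And>P A. P \<noteq> 0 \<Longrightarrow> -((-2 / P) * A / (2 * (1 + d))) = A / ((1 + d) * P)" proof -
      fix P A :: real assume P: "P \<noteq> 0"
      have "1 + d \<noteq> 0" using d by simp
      hence "P * (1 + d) \<noteq> 0" using P by simp
      hence "-((-2 / P) * A / (2 * (1 + d))) = (2 * A) / (2 * (P * (1 + d)))" by (simp add: mult_ac)
      also have "\<dots> = A / (P * (1 + d))" by (rule mult_divide_mult_cancel_left) simp
      finally show "-((-2 / P) * A / (2 * (1 + d))) = A / ((1 + d) * P)" by (simp add: mult_ac)
    qed
    show ?thesis unfolding L Hdd_eq by (rule gen) (use z0 z1 in simp)
  qed
  also have "\<dots> \<le> 1" using jen z0 z1 d by (simp add: divide_le_eq_1)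
  finally show ?thesis .
qed

lemma xlnx_cont: "continuous_on {0..1} (\<lambda>x::real. x * ln x)"
proof -
  have "continuous (at x within {0..1}) (\<lambda>x::real. x * ln x)" if x: "x \<in> {0..1}" for x
  proof (cases "x = 0")
    case True
    have "((\<lambda>x::real. x * ln x) \<longlongrightarrow> 0) (at_right 0)" by real_asymp
    hence "((\<lambda>x::real. x * ln x) \<longlongrightarrow> 0) (at 0 within {0..1})"
      by (simp add: at_within_Icc_at_right)
    thus ?thesis using True by (simp add: continuous_within)
  next
    case False
    hence "0 < x" using x by simp
    hence "isCont (\<lambda>x::real. x * ln x) x" by (intro continuous_intros) auto
    thus ?thesis by (rule continuous_at_imp_continuous_within)
  qed
  thus ?thesis by (simp add: continuous_on_eq_continuous_within)
qed

lemma Hfun_cont: "continuous_on {0..1} Hfun"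
proof -
  have c1: "continuous_on {0..1} (\<lambda>x::real. (1 - x) * ln (1 - x))"
  proof (rule continuous_on_compose2[OF xlnx_cont, of _ "\<lambda>x. 1 - x"])
    show "continuous_on {0..1} (\<lambda>x::real. 1 - x)" by (intro continuous_intros)
  qed auto
  show ?thesis unfolding Hfun_def[abs_def]
    by (intro continuous_intros xlnx_cont c1)
qed

lemma zf_Dsq: "0 < d \<Longrightarrow> x \<in> Dsq \<Longrightarrow> 0 \<le> (fst x + d * snd x)/(1+d) \<and> (fst x + d * snd x)/(1+d) \<le> 1"
proof -
  assume d: "0 < d" and x: "x \<in> Dsq"
  have x01: "0 \<le> fst x" "fst x \<le> 1" "0 \<le> snd x" "snd x \<le> 1" using x by (auto simp: Dsq_def mem_Times_iff)
  have "d * snd x \<le> d * 1" using d x01 by (intro mult_left_mono) auto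
  moreover have "0 \<le> d * snd x" using d x01 by simp
  ultimately have "fst x + d * snd x \<le> 1 + d" "0 \<le> fst x + d * snd x" using x01 by linarith+
  thus ?thesis using d by (simp add: divide_le_eq)
qed

lemma taulow_cont: "0 < d \<Longrightarrow> continuous_on Dsq (taulow d)"
  unfolding taulow_def[abs_def]
  by (intro continuous_intros continuous_on_compose2[OF Hfun_cont]) (auto dest: zf_Dsq)

lemma zf_open: assumes d: "0 < d" and x: "x \<in> Dsq - {(0,0), (1,1)}"
  shows "0 < (fst x + d * snd x)/(1+d)" "(fst x + d * snd x)/(1+d) < 1"
proof -
  obtain x1 x2 where xx: "x = (x1, x2)" by (cases x)
  have r: "0 \<le> x1" "x1 \<le> 1" "0 \<le> x2" "x2 \<le> 1" "\<not> (x1 = 0 \<and> x2 = 0)" "\<not> (x1 = 1 \<and> x2 = 1)"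
    using x by (auto simp: xx Dsq_def)
  have "0 < x1 + d * x2"
  proof (cases "x1 = 0")
    case True
    hence "0 < x2" using r by auto
    thus ?thesis using True d by simp
  next
    case False
    hence "0 < x1" using r by auto
    moreover have "0 \<le> d * x2" using r d by simp
    ultimately show ?thesis by simp
  qed
  thus "0 < (fst x + d * snd x)/(1+d)" using d by (simp add: xx)
  have "x1 + d * x2 < 1 + d"
  proof (cases "x1 = 1")
    case True
    hence "x2 < 1" using r by auto
    hence "d * x2 < d * 1" using d by (intro mult_strict_left_mono) auto
    thus ?thesis using True by simp
  next
    case False
    hence "x1 < 1" using r by auto
    moreover have "d * x2 \<le> d * 1" using r d by (intro mult_left_mono) auto
    ultimately show ?thesis by simp
  qed
  thus "(fst x + d * snd x)/(1+d) < 1" using d by (simp add: xx)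
qed

lemma genq_lin: "genq d \<kappa> N N2 (\<lambda>y. c * f y - g y) x = c * genq d \<kappa> N N2 f x - genq d \<kappa> N N2 g x"
  unfolding genq_def bern_Eb comp_def by (simp add: Eb_diff Eb_cmult algebra_simps)

lemma conv01: "0 \<le> (t::real) \<Longrightarrow> t \<le> 1 \<Longrightarrow> 0 \<le> a \<Longrightarrow> a \<le> 1 \<Longrightarrow> 0 \<le> b \<Longrightarrow> b \<le> 1
   \<Longrightarrow> 0 \<le> (1 - t) * a + t * b \<and> (1 - t) * a + t * b \<le> 1"
proof -
  assume h: "0 \<le> t" "t \<le> 1" "0 \<le> a" "a \<le> 1" "0 \<le> b" "b \<le> 1"
  have "(1 - t) * a \<le> (1 - t) * 1" "t * b \<le> t * 1" using h by (intro mult_left_mono; simp)+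
  moreover have "0 \<le> (1 - t) * a" "0 \<le> t * b" using h by simp_all
  ultimately show ?thesis by simp
qed

lemma Amap_Dsq: assumes d: "0 < d" "d \<le> 1" and k: "0 \<le> \<kappa> / real N" "\<kappa> / real N \<le> 1" and y: "y \<in> Dsq"
  shows "Amap d \<kappa> N y \<in> Dsq"
proof -
  define k where "k = \<kappa> / real N"
  have y01: "0 \<le> fst y" "fst y \<le> 1" "0 \<le> snd y" "snd y \<le> 1" using y by (auto simp: Dsq_def mem_Times_iff)
  have k0: "0 \<le> k" "k \<le> 1" using k by (simp_all add: k_def)
  have kd: "0 \<le> k * d" "k * d \<le> 1" using k0 d by (auto intro: mult_le_one)
  have "fst (Amap d \<kappa> N y) = (1 - k * d) * fst y + (k * d) * snd y"
    unfolding Amap_def Mmap_def k_def by (simp add: algebra_simps)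
  moreover have "snd (Amap d \<kappa> N y) = (1 - k) * snd y + k * fst y"
    unfolding Amap_def Mmap_def k_def by (simp add: algebra_simps)
  ultimately show ?thesis using conv01[OF kd y01(1,2,3,4)] conv01[of k "snd y" "fst y"] k0 y01
    by (auto simp: Dsq_def mem_Times_iff)
qed


lemma Dsq_compact: "compact Dsq" unfolding Dsq_def by (intro compact_Times compact_Icc)
lemma Dsq_closed: "closed Dsq" unfolding Dsq_def by (intro closed_Times closed_atLeastAtMost)

lemma taulow_corners: "taulow d (0,0) = 0" "0 < d \<Longrightarrow> taulow d (1,1) = 0"
  by (simp_all add: taulow_def Hfun_def)

lemma scaled:
  fixes d \<kappa> :: real and \<tau> :: "real \<times> real \<Rightarrow> real"
  assumes d_pos: "0 < d" and d_le: "d \<le> 1" and d_rat: "d \<in> \<rat>"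
    and kappa_pos: "0 < \<kappa>"
    and tau_E: "inE \<tau>"
    and tau_eq: "\<And>K. compact K \<Longrightarrow> K \<subseteq> Dsq - {(0,0), (1,1)} \<Longrightarrow>
        \<forall>\<epsilon>>0. \<exists>N0. \<forall>N N2. N \<ge> N0 \<and> real N2 = d * real N \<longrightarrow>
           (\<forall>x\<in>K. \<bar>genq d \<kappa> N N2 \<tau> x + 1\<bar> < \<epsilon>)"
    and eta: "0 < \<eta>" "\<eta> < 1"
  shows "\<forall>x\<in>Dsq. (1 - \<eta>) * taulow d x \<le> \<tau> x"
proof (rule ccontr)
  assume "\<not> (\<forall>x\<in>Dsq. (1 - \<eta>) * taulow d x \<le> \<tau> x)"
  then obtain x0 where x0: "x0 \<in> Dsq" "\<tau> x0 < (1 - \<eta>) * taulow d x0" by auto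
  define w where "w = (\<lambda>y. (1 - \<eta>) * taulow d y - \<tau> y)"
  have tauc: "continuous_on Dsq \<tau>" and tau0: "\<tau> (0,0) = 0" "\<tau> (1,1) = 0" using tau_E by (auto simp: inE_def)
  have wc: "continuous_on Dsq w" unfolding w_def using taulow_cont[OF d_pos] tauc by (intro continuous_intros)
  obtain xm where xm: "xm \<in> Dsq" "\<And>y. y \<in> Dsq \<Longrightarrow> w y \<le> w xm"
    using continuous_attains_sup[OF Dsq_compact _ wc] x0 by blast
  define m where "m = w xm"
  have m0: "0 < m" using xm(2)[OF x0(1)] x0(2) by (simp add: m_def w_def)
  define K where "K = Dsq \<inter> w -` {m/2..}"
  have Kc: "compact K"
  proof -
    have "compact (Dsq \<inter> (Dsq \<inter> w -` {m/2..}))"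
      by (intro compact_Int_closed Dsq_compact continuous_closed_preimage wc Dsq_closed closed_atLeast)
    thus ?thesis unfolding K_def by (simp add: Int_absorb)
  qed
  have wcorner: "w (0,0) = 0" "w (1,1) = 0" unfolding w_def using tau0 taulow_corners d_pos by simp_all
  have KD: "K \<subseteq> Dsq - {(0,0), (1,1)}"
    using wcorner m0 by (auto simp: K_def)
  have xmK: "xm \<in> K" using xm m0 by (simp add: K_def m_def)
  define zf where "zf = (\<lambda>y::real\<times>real. (fst y + d * snd y)/(1+d))"
  define g where "g = (\<lambda>y. min (zf y) (1 - zf y))"
  have gc: "continuous_on K g" unfolding g_def zf_def by (intro continuous_intros) (use d_pos in auto)
  obtain xk where xk: "xk \<in> K" "\<And>y. y \<in> K \<Longrightarrow> g xk \<le> g y"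
    using continuous_attains_inf[OF Kc _ gc] xmK by blast
  define a where "a = g xk"
  have a0: "0 < a"
  proof -
    have "xk \<in> Dsq - {(0,0), (1,1)}" using KD xk(1) by blast
    from zf_open[OF d_pos this] show ?thesis by (simp add: a_def g_def zf_def)
  qed
  have aK: "a \<le> zf y \<and> zf y \<le> 1 - a" if y: "y \<in> K" for y
  proof -
    have "a \<le> min (zf y) (1 - zf y)" using xk(2)[OF y] by (simp add: a_def g_def)
    thus ?thesis by simp
  qed
  define \<delta> where "\<delta> = \<eta> / 4"
  have del0: "0 < \<delta>" using eta by (simp add: \<delta>_def)
  have E: "\<forall>\<epsilon>>0. \<exists>N0. \<forall>N N2. N \<ge> N0 \<and> real N2 = d * real N \<longrightarrow>
           (\<forall>x\<in>K. \<bar>genq d \<kappa> N N2 \<tau> x + 1\<bar> < \<epsilon>)" by (rule tau_eq[OF Kc KD])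
  have e4: "0 < \<eta> / 4" using eta by simp
  obtain N0 where N0': "\<forall>N N2. N \<ge> N0 \<and> real N2 = d * real N \<longrightarrow> (\<forall>x\<in>K. \<bar>genq d \<kappa> N N2 \<tau> x + 1\<bar> < \<eta> / 4)"
    using E[rule_format, OF e4] by blast
  have N0: "\<And>N N2. N \<ge> N0 \<Longrightarrow> real N2 = d * real N \<Longrightarrow> \<forall>x\<in>K. \<bar>genq d \<kappa> N N2 \<tau> x + 1\<bar> < \<eta> / 4"
    using N0' by blast
  obtain p q :: nat where pq: "q \<noteq> 0" "\<bar>d\<bar> = real p / real q"
    using Rats_abs_nat_div_natE[OF d_rat] by metis
  have dpq: "d = real p / real q" using pq d_pos by simp
  define Ca where "Ca = 2 / a^3 + 1 / (a^4 * \<delta>)"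
  have Ca0: "0 < Ca" unfolding Ca_def using a0 del0 by (intro add_pos_pos divide_pos_pos mult_pos_pos zero_less_power) auto
  define M where "M = N0 + nat \<lceil>\<kappa>\<rceil> + nat \<lceil>8 * Ca / \<delta>\<rceil> + 1"
  define N where "N = q * M"
  define N2 where "N2 = p * M"
  have NM: "M \<le> N" using pq(1) by (simp add: N_def)
  have N1: "0 < N" using pq(1) by (simp add: N_def M_def)
  have NN0: "N0 \<le> N" using NM by (simp add: M_def)
  have Nk: "\<kappa> \<le> real N"
  proof -
    have c1: "\<kappa> \<le> real (nat \<lceil>\<kappa>\<rceil>)" by linarith
    have "nat \<lceil>\<kappa>\<rceil> \<le> N" using NM unfolding M_def by linarith
    hence "real (nat \<lceil>\<kappa>\<rceil>) \<le> real N" by (simp only: of_nat_le_iff)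
    thus ?thesis using c1 by linarith
  qed
  have NC: "8 * Ca / \<delta> \<le> real N"
  proof -
    have c1: "8 * Ca / \<delta> \<le> real (nat \<lceil>8 * Ca / \<delta>\<rceil>)" by linarith
    have "nat \<lceil>8 * Ca / \<delta>\<rceil> \<le> N" using NM unfolding M_def by linarith
    hence "real (nat \<lceil>8 * Ca / \<delta>\<rceil>) \<le> real N" by (simp only: of_nat_le_iff)
    thus ?thesis using c1 by linarith
  qed
  have N2d: "real N2 = d * real N" using pq(1) by (simp add: N_def N2_def dpq)
  have G1: "\<bar>genq d \<kappa> N N2 \<tau> xm + 1\<bar> < \<eta> / 4" using N0[OF NN0 N2d] xmK by blast
  have azm: "a \<le> (fst xm + d * snd xm) / (1 + d)" "(fst xm + d * snd xm) / (1 + d) \<le> 1 - a"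
    using aK[OF xmK] by (simp_all add: zf_def)
  have G2: "- (1 + \<delta>) - 8 * Ca / real N \<le> genq d \<kappa> N N2 (taulow d) xm"
    using genq_taulow_lower[OF d_pos N1 N2d xm(1) a0 azm del0] unfolding Ca_def by simp
  have "8 * Ca / real N \<le> \<delta>"
  proof -
    have "8 * Ca \<le> real N * \<delta>" using NC del0 by (simp add: pos_divide_le_eq)
    thus ?thesis using N1 by (simp add: pos_divide_le_eq mult.commute)
  qed
  hence G2': "- (1 + 2 * \<delta>) \<le> genq d \<kappa> N N2 (taulow d) xm" using G2 by linarith
  have G3: "genq d \<kappa> N N2 w xm = (1 - \<eta>) * genq d \<kappa> N N2 (taulow d) xm - genq d \<kappa> N N2 \<tau> xm"
    unfolding w_def by (rule genq_lin)
  have "(1 - \<eta>) * (- (1 + 2 * \<delta>)) \<le> (1 - \<eta>) * genq d \<kappa> N N2 (taulow d) xm"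
    using G2' eta by (intro mult_left_mono) auto
  moreover have "(1 - \<eta>) * (- (1 + 2 * \<delta>)) = -1 + \<eta>/2 + \<eta>^2/2"
    by (simp add: \<delta>_def algebra_simps power2_eq_square) (simp add: field_simps)
  moreover have "0 \<le> \<eta>^2" by simp
  moreover have "genq d \<kappa> N N2 \<tau> xm < -1 + \<eta>/4" using G1 by (simp only: abs_less_iff) linarith
  ultimately have pos: "0 < genq d \<kappa> N N2 w xm"
    unfolding G3 using eta by linarith
  have kN: "0 \<le> \<kappa> / real N" "\<kappa> / real N \<le> 1" using kappa_pos N1 Nk by (simp_all add: divide_le_eq)
  have "bern N N2 (w \<circ> Amap d \<kappa> N) xm \<le> Eb N N2 xm (\<lambda>a b. m)"
    unfolding bern_Eb
  proof (rule Eb_mono[OF xm(1)])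
    fix j1 j2 assume j: "j1 \<le> N" "j2 \<le> N2"
    have N2pos: "0 < real N2" using N2d d_pos N1 by simp
    have "(real j1 / real N, real j2 / real N2) \<in> Dsq"
      using j N1 N2pos by (auto simp: Dsq_def mem_Times_iff divide_le_eq)
    hence "Amap d \<kappa> N (real j1 / real N, real j2 / real N2) \<in> Dsq"
      by (rule Amap_Dsq[OF d_pos d_le kN])
    thus "(w \<circ> Amap d \<kappa> N) (real j1 / real N, real j2 / real N2) \<le> m"
      using xm(2) by (simp add: m_def)
  qed
  hence "genq d \<kappa> N N2 w xm \<le> 0"
    unfolding genq_def Eb_const m_def using N1 by (simp add: mult_nonpos_nonneg)
  thus False using pos by simp
qed


theorem theorem4:
  fixes d \<kappa> :: real and \<tau> :: "real \<times> real \<Rightarrow> real"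
  assumes d_pos: "0 < d" and d_le: "d \<le> 1" and d_rat: "d \<in> \<rat>"
    and kappa_pos: "0 < \<kappa>"
    and tau_E: "inE \<tau>"
    and tau_eq: "\<And>K. compact K \<Longrightarrow> K \<subseteq> Dsq - {(0,0), (1,1)} \<Longrightarrow>
        \<forall>\<epsilon>>0. \<exists>N0. \<forall>N N2. N \<ge> N0 \<and> real N2 = d * real N \<longrightarrow>
           (\<forall>x\<in>K. \<bar>genq d \<kappa> N N2 \<tau> x + 1\<bar> < \<epsilon>)"
  shows "(\<forall>x \<in> Dsq - {(0,0), (1,1)}. - Ld d \<kappa> (taulow d) x \<le> 1)
         \<and> (\<forall>x \<in> Dsq. taulow d x \<le> \<tau> x)"
proof
  show "\<forall>x \<in> Dsq - {(0,0), (1,1)}. - Ld d \<kappa> (taulow d) x \<le> 1"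
    using part1[OF d_pos] by blast
  show "\<forall>x \<in> Dsq. taulow d x \<le> \<tau> x"
  proof
    fix x assume x: "x \<in> Dsq"
    show "taulow d x \<le> \<tau> x"
    proof (rule ccontr)
      assume "\<not> taulow d x \<le> \<tau> x"
      hence gap: "0 < taulow d x - \<tau> x" by simp
      define T where "T = taulow d x"
      define \<eta> where "\<eta> = min (1/2) ((taulow d x - \<tau> x) / (2 * (\<bar>T\<bar> + 1)))"
      have eta: "0 < \<eta>" "\<eta> < 1" using gap by (auto simp: \<eta>_def)
      have sc: "(1 - \<eta>) * T \<le> \<tau> x"
        using scaled[OF d_pos d_le d_rat kappa_pos tau_E tau_eq eta] x by (simp add: T_def)
      have "\<eta> * \<bar>T\<bar> \<le> (taulow d x - \<tau> x) / (2 * (\<bar>T\<bar> + 1)) * \<bar>T\<bar>"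
        by (intro mult_right_mono) (auto simp: \<eta>_def)
      also have "\<dots> \<le> (taulow d x - \<tau> x) / (2 * (\<bar>T\<bar> + 1)) * (\<bar>T\<bar> + 1)"
        using gap by (intro mult_left_mono) auto
      also have "\<dots> = (taulow d x - \<tau> x) / 2" by (simp add: field_simps)
      finally have "\<eta> * \<bar>T\<bar> \<le> (taulow d x - \<tau> x) / 2" .
      moreover have "\<eta> * T \<le> \<eta> * \<bar>T\<bar>" using eta by (intro mult_left_mono) auto
      moreover have "(1 - \<eta>) * T = T - \<eta> * T" by (simp add: algebra_simps)
      ultimately have "T - \<tau> x \<le> (taulow d x - \<tau> x) / 2" using sc by linarith
      hence "taulow d x - \<tau> x \<le> (taulow d x - \<tau> x) / 2" using T_def by simp
      thus False using gap by (simp add: field_simps)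
    qed
  qed
qed

end
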